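(* Let $\mathbf a=\{a_1,\dots,a_A\}$, $\mathbf c=\{c_1,\dots,c_C\}$, $d_1,d_2\in\mathbb C\setminus\{0\}$ with $d_2/d_1\notin\{q^m:m\in\mathbb Z\}$, $d_1\mathbf c$ and $d_2\mathbf c$ disjoint from $\Omega_q$, and generic so that all quantities below are defined, and let $s\in\mathbb C\setminus\{0\}$. Fix a square root $\sqrt{d_1/d_2}$ and put $\sqrt{d_2/d_1}:=1/\sqrt{d_1/d_2}$, $\sqrt{d_1d_2}:=d_1\sqrt{d_2/d_1}$. With $$H(\mathbf a,\mathbf c,\{d_1,d_2\};q):=\mathop{\mathrm{Sym}}_{d_1;d_2}\frac{(d_1\mathbf a;q)_\infty}{(d_2/d_1,d_1\mathbf c;q)_\infty}{}_{C}\phi_{A+1}^{\,C-A-2}\!\left(\begin{matrix}d_1\mathbf c\\ d_1\mathbf a,\ qd_1/d_2\end{matrix};q,q\right),$$ one has $$H(\mathbf a,\mathbf c,\{d_1,d_2\};q)=\frac{\sqrt{d_2/d_1}}{(1-q)s(q;q)_\infty\vartheta(d_2/d_1;q)}\int_{s\sqrt{d_2/d_1}}^{s\sqrt{d_1/d_2}}\frac{\big((q\sqrt{d_1/d_2},q\sqrt{d_2/d_1},\mathbf a\sqrt{d_1d_2})\tfrac us;q\big)_\infty}{\big(\mathbf c\sqrt{d_1d_2}\tfrac us;q\big)_\infty}\,d_qu,$$ and the right-hand side is symmetric under interchanging $d_1$ and $d_2$.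
   Context: $q\in\mathbb C$, $0<|q|<1$; $q$-shifted factorials $(a;q)_n$, $(a;q)_\infty$, products of several; a list as entry stands for all its elements, $x\mathbf a=\{xa_i\}$, $(\mathbf u y;q)_\infty=\prod_i(u_iy;q)_\infty$. $\Omega_q=\{q^{-k}:k\in\mathbb N_0\}$. $\vartheta(x;q)=(x,q/x;q)_\infty$. $\mathop{\mathrm{Sym}}_{d_1;d_2}F(d_1,d_2)=F(d_1,d_2)+F(d_2,d_1)$. Basic hypergeometric series ${}_{r+1}\phi_s=\sum_{k\ge0}\frac{(a_1,\dots,a_{r+1};q)_k}{(q,b_1,\dots,b_s;q)_k}((-1)^kq^{\binom k2})^{s-r}z^k$; ${}_{r+1}\phi_s^{\,-p}$ ($p\in\mathbb N_0$) adds $p$ numerator parameters $0$, ${}_{r+1}\phi_s^{\,p}$ adds $p$ denominator parameters $0$. Jackson $q$-integral: $\int_\alpha^\beta g(u)\,d_qu=(1-q)\beta\sum_{n\ge0}q^ng(q^n\beta)-(1-q)\alpha\sum_{n\ge0}q^ng(q^n\alpha)$. *)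

theory Defs
  imports "HOL-Analysis.Analysis"
begin

definition qpoch :: "complex \<Rightarrow> complex \<Rightarrow> nat \<Rightarrow> complex" where
  "qpoch a q n = (\<Prod>j<n. 1 - a * q ^ j)"

definition qpinf :: "complex \<Rightarrow> complex \<Rightarrow> complex" where
  "qpinf a q = prodinf (\<lambda>j. 1 - a * q ^ j)"

definition qpoch_list :: "complex list \<Rightarrow> complex \<Rightarrow> nat \<Rightarrow> complex" where
  "qpoch_list as q n = prod_list (map (\<lambda>a. qpoch a q n) as)"

definition qpinf_list :: "complex list \<Rightarrow> complex \<Rightarrow> complex" where
  "qpinf_list as q = prod_list (map (\<lambda>a. qpinf a q) as)"

definition Omega_q :: "complex \<Rightarrow> complex set" where
  "Omega_q q = range (\<lambda>k::nat. inverse (q ^ k))"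

definition theta :: "complex \<Rightarrow> complex \<Rightarrow> complex" where
  "theta x q = qpinf x q * qpinf (q / x) q"

text \<open>basic hypergeometric series r+1 phi s with numerator list as (length r+1)
  and denominator list bs (length s)\<close>
definition bhs :: "complex list \<Rightarrow> complex list \<Rightarrow> complex \<Rightarrow> complex \<Rightarrow> complex" where
  "bhs as bs q z = (\<Sum>k. qpoch_list as q k / (qpoch q q k * qpoch_list bs q k)
      * ((-1) ^ k * q ^ (k choose 2)) powi (int (length bs) - int (length as) + 1) * z ^ k)"

text \<open>phi with superscript p: p \<ge> 0 adds p denominator zeros, p < 0 adds -p numerator zeros\<close>
definition bhs_sup :: "int \<Rightarrow> complex list \<Rightarrow> complex list \<Rightarrow> complex \<Rightarrow> complex \<Rightarrow> complex" where
  "bhs_sup p as bs q z =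
     (if 0 \<le> p then bhs as (bs @ replicate (nat p) 0) q z
      else bhs (as @ replicate (nat (- p)) 0) bs q z)"

definition jackson :: "(complex \<Rightarrow> complex) \<Rightarrow> complex \<Rightarrow> complex \<Rightarrow> complex \<Rightarrow> complex" where
  "jackson g q \<alpha> \<beta> = (1 - q) * \<beta> * (\<Sum>n. q ^ n * g (q ^ n * \<beta>))
                      - (1 - q) * \<alpha> * (\<Sum>n. q ^ n * g (q ^ n * \<alpha>))"

definition Hterm :: "complex list \<Rightarrow> complex list \<Rightarrow> complex \<Rightarrow> complex \<Rightarrow> complex \<Rightarrow> complex" where
  "Hterm a c d1 d2 q =
     qpinf_list (map (\<lambda>x. d1 * x) a) q / (qpinf (d2 / d1) q * qpinf_list (map (\<lambda>x. d1 * x) c) q)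
     * bhs_sup (int (length c) - int (length a) - 2)
         (map (\<lambda>x. d1 * x) c) (map (\<lambda>x. d1 * x) a @ [q * d1 / d2]) q q"

definition H :: "complex list \<Rightarrow> complex list \<Rightarrow> complex \<Rightarrow> complex \<Rightarrow> complex \<Rightarrow> complex" where
  "H a c d1 d2 q = Hterm a c d1 d2 q + Hterm a c d2 d1 q"

text \<open>right-hand side; r is the fixed square root of d1/d2, so sqrt(d2/d1) = 1/r
  and sqrt(d1 d2) = d1/r\<close>
definition RHS :: "complex list \<Rightarrow> complex list \<Rightarrow> complex \<Rightarrow> complex \<Rightarrow> complex \<Rightarrow> complex \<Rightarrow> complex \<Rightarrow> complex" where
  "RHS a c d1 d2 r s q =
     (1 / r) / ((1 - q) * s * qpinf q q * theta (d2 / d1) q)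
     * jackson (\<lambda>u. qpinf (q * r * u / s) q * qpinf (q / r * u / s) q
                     * qpinf_list (map (\<lambda>x. x * (d1 / r) * u / s) a) q
                     / qpinf_list (map (\<lambda>x. x * (d1 / r) * u / s) c) q)
         q (s / r) (s * r)"

end

theory Submission
  imports Defs
begin

lemma qconv:
  assumes "norm (q::complex) < 1"
  shows "convergent_prod (\<lambda>j. 1 - x * q ^ j)"
proof -
  have "summable (\<lambda>j. norm x * norm q ^ j)"
    using assms by (intro summable_mult summable_geometric) auto
  hence "summable (\<lambda>j. norm ((1 - x * q ^ j) - 1))"
    by (simp add: norm_mult norm_power)
  thus ?thesis
    by (intro abs_convergent_prod_imp_convergent_prod summable_imp_abs_convergent_prod)
qed

lemma qpoch_lim:
  assumes "norm (q::complex) < 1"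
  shows "(\<lambda>n. qpoch x q n) \<longlonglongrightarrow> qpinf x q"
proof -
  have "(\<lambda>n. \<Prod>i\<le>n. 1 - x * q ^ i) \<longlonglongrightarrow> qpinf x q"
    unfolding qpinf_def by (rule convergent_prod_LIMSEQ[OF qconv[OF assms]])
  hence "(\<lambda>n. qpoch x q (Suc n)) \<longlonglongrightarrow> qpinf x q"
    by (simp add: qpoch_def lessThan_Suc_atMost)
  thus ?thesis by (rule LIMSEQ_imp_Suc)
qed

lemma qpoch_add: "qpoch x q (n + m) = qpoch x q n * qpoch (x * q ^ n) q m"
  by (induction m) (simp_all add: qpoch_def power_add mult.assoc)

lemma qpinf_split:
  assumes "norm (q::complex) < 1"
  shows "qpinf x q = qpoch x q n * qpinf (x * q ^ n) q"
proof -
  have "(\<lambda>m. qpoch x q (n + m)) \<longlonglongrightarrow> qpoch x q n * qpinf (x * q ^ n) q"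
    unfolding qpoch_add by (intro tendsto_mult tendsto_const qpoch_lim assms)
  moreover have "(\<lambda>m. qpoch x q (m + n)) \<longlonglongrightarrow> qpinf x q"
    by (rule LIMSEQ_ignore_initial_segment[OF qpoch_lim[OF assms]])
  hence "(\<lambda>m. qpoch x q (n + m)) \<longlonglongrightarrow> qpinf x q" by (simp add: add.commute)
  ultimately show ?thesis by (rule LIMSEQ_unique[rotated])
qed

lemma qpinf_nz:
  assumes "norm (q::complex) < 1" "\<And>j. 1 - x * q ^ j \<noteq> 0"
  shows "qpinf x q \<noteq> 0"
  unfolding qpinf_def by (rule prodinf_nonzero[OF qconv[OF assms(1)]]) (use assms in auto)

lemma qpoch_nz:
  assumes "\<And>j. 1 - x * q ^ j \<noteq> 0"
  shows "qpoch x q n \<noteq> 0"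
  unfolding qpoch_def using assms by auto

lemma omega_nz:
  assumes "(q::complex) \<noteq> 0" "x \<notin> Omega_q q"
  shows "1 - x * q ^ j \<noteq> 0"
proof
  assume "1 - x * q ^ j = 0"
  hence "x = inverse (q ^ j)" using assms(1) by (simp add: field_simps)
  thus False using assms(2) unfolding Omega_q_def by auto
qed

lemma qpoch_Suc: "qpoch x q (Suc k) = qpoch x q k * (1 - x * q ^ k)"
  by (simp add: qpoch_def)

lemma qpoch_zero: "qpoch 0 q k = 1"
  by (simp add: qpoch_def)


lemma qpinf_list_split:
  assumes "norm (q::complex) < 1"
  shows "qpinf_list (map (\<lambda>x. d*x) a) q = qpoch_list (map (\<lambda>x. d*x) a) q n * qpinf_list (map (\<lambda>x. d*x*q^n) a) q"
proof (induction a)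
  case (Cons y a)
  have "qpinf (d*y) q = qpoch (d*y) q n * qpinf (d*y*q^n) q" by (rule qpinf_split[OF assms])
  with Cons show ?case by (simp add: qpinf_list_def qpoch_list_def mult_ac)
qed (simp add: qpinf_list_def qpoch_list_def)

lemma qpoch_list_nz:
  assumes "(q::complex) \<noteq> 0" "\<forall>x\<in>set a. d*x \<notin> Omega_q q"
  shows "qpoch_list (map (\<lambda>x. d*x) a) q n \<noteq> 0"
  using assms
proof (induction a)
  case (Cons y a)
  have "qpoch (d*y) q n \<noteq> 0" by (rule qpoch_nz, rule omega_nz) (use Cons.prems in auto)
  with Cons show ?case by (simp add: qpoch_list_def)
qed (simp add: qpoch_list_def)

lemma qpinf_list_nz:
  assumes "(q::complex) \<noteq> 0" "norm q < 1" "\<forall>x\<in>set a. d*x \<notin> Omega_q q"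
  shows "qpinf_list (map (\<lambda>x. d*x) a) q \<noteq> 0"
  using assms
proof (induction a)
  case (Cons y a)
  have "qpinf (d*y) q \<noteq> 0" by (rule qpinf_nz, simp add: assms, rule omega_nz) (use Cons.prems in auto)
  with Cons show ?case by (simp add: qpinf_list_def)
qed (simp add: qpinf_list_def)

lemma qpoch_list_Suc:
  "qpoch_list xs q (Suc k) = qpoch_list xs q k * prod_list (map (\<lambda>x. 1 - x*q^k) xs)"
  by (induction xs) (simp_all add: qpoch_list_def qpoch_Suc mult_ac)

lemma qpoch_list_rep0:
  "qpoch_list (xs @ replicate m 0) q k = qpoch_list xs q k"
  by (simp add: qpoch_list_def qpoch_zero)

lemma prod_list_lim:
  assumes "norm (q::complex) < 1"
  shows "(\<lambda>k. prod_list (map (\<lambda>x. 1 - x*q^k) xs)) \<longlonglongrightarrow> 1"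
proof (induction xs)
  case Nil then show ?case by simp
next
  case (Cons y xs)
  have "(\<lambda>k. 1 - y*q^k) \<longlonglongrightarrow> 1 - y * 0"
    by (intro tendsto_intros LIMSEQ_power_zero assms)
  from tendsto_mult[OF this Cons.IH] show ?case by simp
qed

definition T :: "complex list \<Rightarrow> complex list \<Rightarrow> complex \<Rightarrow> complex \<Rightarrow> complex \<Rightarrow> nat \<Rightarrow> complex" where
  "T a c d e q k = q^k * qpoch_list (map (\<lambda>x. d*x) c) q k
     / (qpoch q q k * qpoch_list (map (\<lambda>x. d*x) a) q k * qpoch (q*d/e) q k)"

lemma qq_nz: "norm (q::complex) < 1 \<Longrightarrow> 1 - q * q ^ j \<noteq> 0"
proof
  assume "norm q < 1" "1 - q * q ^ j = 0"
  hence "norm (q ^ Suc j) = 1" by (metis eq_iff_diff_eq_0 norm_one power_Suc)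
  moreover have "norm (q ^ Suc j) < 1"
  proof -
    have "norm q ^ j \<le> 1" using \<open>norm q < 1\<close> by (simp add: power_le_one)
    hence "norm q * norm q ^ j \<le> norm q" by (simp add: mult_left_le)
    thus ?thesis using \<open>norm q < 1\<close> by (simp add: norm_mult norm_power)
  qed
  ultimately show False by simp
qed

lemma T_summable:
  assumes "(q::complex) \<noteq> 0" "norm q < 1" "\<forall>x\<in>set a. d*x \<notin> Omega_q q"
    "\<And>j. 1 - (q*d/e)*q^j \<noteq> 0"
  shows "summable (T a c d e q)"
proof -
  define R where "R k = q * prod_list (map (\<lambda>x. 1 - x*q^k) (map (\<lambda>x. d*x) c))
    / ((1 - q*q^k) * prod_list (map (\<lambda>x. 1 - x*q^k) (map (\<lambda>x. d*x) a)) * (1 - (q*d/e)*q^k))" for k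
  have Rlim: "R \<longlonglongrightarrow> q * 1 / ((1 - q * 0) * 1 * (1 - (q*d/e) * 0))"
    unfolding R_def
    by (intro tendsto_intros prod_list_lim LIMSEQ_power_zero assms) simp
  have AnzS: "prod_list (map (\<lambda>x. 1 - x*q^k) (map (\<lambda>x. d*x) a)) \<noteq> 0" for k
    using assms(1,3)
  proof (induction a)
    case (Cons y a)
    have "1 - d*y*q^k \<noteq> 0" by (rule omega_nz) (use Cons.prems in auto)
    with Cons show ?case by simp
  qed simp
  have rec: "T a c d e q (Suc k) = T a c d e q k * R k" for k
  proof -
    have "qpoch q q k \<noteq> 0" by (rule qpoch_nz) (rule qq_nz[OF assms(2)])
    moreover have "qpoch (q*d/e) q k \<noteq> 0" by (rule qpoch_nz) (rule assms(4))
    moreover have "qpoch_list (map (\<lambda>x. d*x) a) q k \<noteq> 0" by (rule qpoch_list_nz[OF assms(1,3)])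
    moreover note AnzS[of k] qq_nz[OF assms(2), of k] assms(4)[of k]
    ultimately show ?thesis
      unfolding T_def R_def qpoch_list_Suc qpoch_Suc by (simp add: field_simps)
  qed
  define cc where "cc = (1 + norm q) / 2"
  have "cc < 1" using assms(2) by (simp add: cc_def)
  have "norm q < cc" using assms(2) by (simp add: cc_def)
  have "\<forall>\<^sub>F k in sequentially. norm (R k) < cc"
    using tendsto_norm[OF Rlim] \<open>norm q < cc\<close> by (simp add: order_tendstoD(2))
  then obtain N where N: "\<And>k. k \<ge> N \<Longrightarrow> norm (R k) < cc"
    by (auto simp: eventually_sequentially)
  show ?thesis
  proof (rule summable_ratio_test[OF \<open>cc < 1\<close>, of N])
    fix n assume "n \<ge> N"
    hence "norm (R n) \<le> cc" using N by fastforce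
    thus "norm (T a c d e q (Suc n)) \<le> cc * norm (T a c d e q n)"
      unfolding rec norm_mult by (metis mult.commute mult_right_mono norm_ge_zero)
  qed
qed


definition K :: "complex list \<Rightarrow> complex list \<Rightarrow> complex \<Rightarrow> complex \<Rightarrow> complex \<Rightarrow> complex" where
  "K a c d e q = qpinf (q*d/e) q * qpinf q q * qpinf_list (map (\<lambda>x. d*x) a) q / qpinf_list (map (\<lambda>x. d*x) c) q"

lemma term_eq:
  assumes "(q::complex) \<noteq> 0" "norm q < 1" "\<forall>x\<in>set a. d*x \<notin> Omega_q q" "\<forall>x\<in>set c. d*x \<notin> Omega_q q"
    "\<And>j. 1 - (q*d/e)*q^j \<noteq> 0"
  shows "q^n * (qpinf ((q*d/e)*q^n) q * qpinf (q*q^n) q * qpinf_list (map (\<lambda>x. d*x*q^n) a) q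
           / qpinf_list (map (\<lambda>x. d*x*q^n) c) q) = K a c d e q * T a c d e q n"
proof -
  have s1: "qpinf (q*d/e) q = qpoch (q*d/e) q n * qpinf ((q*d/e)*q^n) q" by (rule qpinf_split[OF assms(2)])
  have s2: "qpinf q q = qpoch q q n * qpinf (q*q^n) q" by (rule qpinf_split[OF assms(2)])
  note s3 = qpinf_list_split[OF assms(2), of d a n]
  note s4 = qpinf_list_split[OF assms(2), of d c n]
  have n1: "qpoch (q*d/e) q n \<noteq> 0" by (rule qpoch_nz) (rule assms(5))
  have n2: "qpoch q q n \<noteq> 0" by (rule qpoch_nz) (rule qq_nz[OF assms(2)])
  have n3: "qpoch_list (map (\<lambda>x. d*x) a) q n \<noteq> 0" by (rule qpoch_list_nz[OF assms(1,3)])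
  have n4: "qpoch_list (map (\<lambda>x. d*x) c) q n \<noteq> 0" by (rule qpoch_list_nz[OF assms(1,4)])
  have n5: "qpinf_list (map (\<lambda>x. d*x) c) q \<noteq> 0" by (rule qpinf_list_nz[OF assms(1,2,4)])
  hence n6: "qpinf_list (map (\<lambda>x. d*x*q^n) c) q \<noteq> 0" using s4 by auto
  have alg: "\<And>P1 P2 PA PC IC I1 I2 IA::complex. P1 \<noteq> 0 \<Longrightarrow> P2 \<noteq> 0 \<Longrightarrow> PA \<noteq> 0 \<Longrightarrow> PC \<noteq> 0 \<Longrightarrow> IC \<noteq> 0 \<Longrightarrow>
     q^n * (I1 * I2 * IA / IC) = (P1*I1 * (P2*I2) * (PA*IA) / (PC*IC)) * (q^n*PC/(P2*PA*P1))"
    by (simp add: field_simps)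
  show ?thesis
    unfolding K_def T_def s1 s2 s3 s4 by (rule alg[OF n1 n2 n3 n4 n6])
qed

lemma sum_eq:
  assumes "(q::complex) \<noteq> 0" "norm q < 1" "\<forall>x\<in>set a. d*x \<notin> Omega_q q" "\<forall>x\<in>set c. d*x \<notin> Omega_q q"
    "\<And>j. 1 - (q*d/e)*q^j \<noteq> 0"
  shows "(\<Sum>n. q^n * (qpinf ((q*d/e)*q^n) q * qpinf (q*q^n) q * qpinf_list (map (\<lambda>x. d*x*q^n) a) q
           / qpinf_list (map (\<lambda>x. d*x*q^n) c) q)) = K a c d e q * suminf (T a c d e q)"
  unfolding term_eq[OF assms]
  by (rule suminf_mult[OF T_summable[OF assms(1,2,3,5)]])

lemma bhs_T:
  "bhs_sup (int (length c) - int (length a) - 2) (map (\<lambda>x. d*x) c) (map (\<lambda>x. d*x) a @ [q*d/e]) q q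
    = suminf (T a c d e q)"
proof -
  have "(\<lambda>k. qpoch_list (map (\<lambda>x. d*x) c @ replicate (nat (- (int (length c) - int (length a) - 2))) 0) q k
        / (qpoch q q k * qpoch_list (map (\<lambda>x. d*x) a @ [q*d/e]) q k) *
        ((-1) ^ k * q ^ (k choose 2)) powi (int (length (map (\<lambda>x. d*x) a @ [q*d/e])) -
           int (length (map (\<lambda>x. d*x) c @ replicate (nat (- (int (length c) - int (length a) - 2))) 0)) + 1) * q ^ k)
        = T a c d e q" if "\<not> 0 \<le> int (length c) - int (length a) - 2"
    using that by (intro ext) (simp add: T_def qpoch_list_rep0 qpoch_list_def qpoch_zero field_simps)
  moreover have "(\<lambda>k. qpoch_list (map (\<lambda>x. d*x) c) q k
        / (qpoch q q k * qpoch_list ((map (\<lambda>x. d*x) a @ [q*d/e]) @ replicate (nat (int (length c) - int (length a) - 2)) 0) q k) *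
        ((-1) ^ k * q ^ (k choose 2)) powi (int (length ((map (\<lambda>x. d*x) a @ [q*d/e]) @ replicate (nat (int (length c) - int (length a) - 2)) 0)) -
           int (length (map (\<lambda>x. d*x) c)) + 1) * q ^ k)
        = T a c d e q" if "0 \<le> int (length c) - int (length a) - 2"
    using that by (intro ext) (simp add: T_def qpoch_list_rep0 qpoch_list_def qpoch_zero field_simps)
  ultimately show ?thesis unfolding bhs_sup_def bhs_def by auto
qed


lemma final_alg:
  fixes r s q d1 d2 QQ P12 P21 LA1 LC1 LA2 LC2 S1 S2 :: complex
  assumes "r^2 = d1/d2" "r \<noteq> 0" "s \<noteq> 0" "q \<noteq> 1" "d1 \<noteq> 0" "d2 \<noteq> 0" "QQ \<noteq> 0" "P12 \<noteq> 0" "P21 \<noteq> 0"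
    "LC1 \<noteq> 0" "LC2 \<noteq> 0" "1 - d2/d1 \<noteq> 0" "1 - d1/d2 \<noteq> 0"
  shows "(1/r)/((1-q) * s * QQ*((1-d2/d1)*P21*P12)) * ((1-q)*(s*r)*((P12*QQ*LA1/LC1)*S1) - (1-q)*(s/r)*((P21*QQ*LA2/LC2)*S2))
    = LA1/(((1-d2/d1)*P21)*LC1)*S1 + LA2/(((1-d1/d2)*P12)*LC2)*S2"
proof -
  have st1: "(1/r)/((1-q) * s * QQ*D) * ((1-q)*(s*r)*A - (1-q)*(s/r)*B) = (A - B*(1/(r*r)))/(QQ*D)"
    if "D \<noteq> 0" for A B D :: complex
    using that assms(2,3,4,7) by (simp add: field_simps)
  have st2: "1/(r*r) = d2/d1" using assms(1,2,5,6) by (simp add: power2_eq_square field_simps)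
  have x0: "d2/d1 \<noteq> 0" using assms(5,6) by simp
  have x1: "1 - d2/d1 \<noteq> 0" by (rule assms(12))
  have x2: "1 - 1/(d2/d1) \<noteq> 0" using assms(13) by simp
  have st3: "(A - B*x)/(QQ*((1-x)*P21*P12)) = LA1/(((1-x)*P21)*LC1)*S1 + LA2/(((1-1/x)*P12)*LC2)*S2"
    if "A = P12*QQ*LA1/LC1*S1" "B = P21*QQ*LA2/LC2*S2" "x \<noteq> 0" "1 - x \<noteq> 0" "1 - 1/x \<noteq> 0" for A B x :: complex
  proof -
    have e: "1 - 1/x = -(1-x)/x" using that(3) by (simp add: field_simps)
    have g: "\<And>y. y \<noteq> 0 \<Longrightarrow> (A - B*x)/(QQ*(y*P21*P12)) = LA1/((y*P21)*LC1)*S1 + LA2/(((-y/x)*P12)*LC2)*S2"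
      unfolding that(1,2) using that(3) assms(7-11) by (simp add: field_simps)
    show ?thesis unfolding e by (rule g[OF that(4)])
  qed
  have nzD: "(1 - d2/d1)*P21*P12 \<noteq> 0" using assms(8,9) x1 by simp
  have "(1/r)/((1-q) * s * QQ*((1-d2/d1)*P21*P12)) * ((1-q)*(s*r)*((P12*QQ*LA1/LC1)*S1) - (1-q)*(s/r)*((P21*QQ*LA2/LC2)*S2))
     = ((P12*QQ*LA1/LC1)*S1 - (P21*QQ*LA2/LC2)*S2*(d2/d1))/(QQ*((1-d2/d1)*P21*P12))"
    using st1[of "(1 - d2/d1)*P21*P12" "(P12*QQ*LA1/LC1)*S1" "(P21*QQ*LA2/LC2)*S2", OF nzD] unfolding st2 by simp
  also have "\<dots> = LA1/(((1-d2/d1)*P21)*LC1)*S1 + LA2/(((1-1/(d2/d1))*P12)*LC2)*S2"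
    by (rule st3[OF refl refl x0 x1 x2])
  finally show ?thesis by simp
qed


lemma qpinf_one:
  assumes "norm (q::complex) < 1"
  shows "qpinf x q = (1 - x) * qpinf (q*x) q"
  using qpinf_split[OF assms, of x 1] by (simp add: qpoch_def mult.commute)

lemma main:
  fixes a c :: "complex list" and d1 d2 r s q :: complex
  assumes q0: "q \<noteq> 0" and q1: "norm q < 1"
    and d1: "d1 \<noteq> 0" and d2: "d2 \<noteq> 0"
    and nr: "d2 / d1 \<notin> range (\<lambda>m::int. q powi m)"
    and hc: "\<forall>x\<in>set c. d1 * x \<notin> Omega_q q \<and> d2 * x \<notin> Omega_q q"
    and ha: "\<forall>x\<in>set a. d1 * x \<notin> Omega_q q \<and> d2 * x \<notin> Omega_q q"
    and s0: "s \<noteq> 0"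
    and r2: "r ^ 2 = d1 / d2"
  shows "RHS a c d1 d2 r s q = Hterm a c d1 d2 q + Hterm a c d2 d1 q"
proof -
  have r0: "r \<noteq> 0" using r2 d1 d2 by auto
  have rr: "r * r = d1/d2" using r2 by (simp add: power2_eq_square)
  have e1: "1 - (q*d1/d2)*q^j \<noteq> 0" for j
  proof
    assume "1 - (q*d1/d2)*q^j = 0"
    hence "d2/d1 = q ^ Suc j" using d1 d2 q0 by (simp add: field_simps)
    hence "d2/d1 = q powi int (Suc j)" by (simp only: power_int_of_nat)
    thus False using nr by blast
  qed
  have e2: "1 - (q*d2/d1)*q^j \<noteq> 0" for j
  proof
    assume "1 - (q*d2/d1)*q^j = 0"
    hence "d2/d1 = inverse (q ^ Suc j)" using d1 d2 q0 by (simp add: field_simps)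
    hence "d2/d1 = q powi (- int (Suc j))" by (simp only: power_int_minus power_int_of_nat)
    thus False using nr by blast
  qed
  have e3: "1 - d2/d1 \<noteq> 0"
  proof
    assume "1 - d2/d1 = 0" hence "d2/d1 = q powi 0" by simp
    thus False using nr by blast
  qed
  have e4: "1 - d1/d2 \<noteq> 0" using e3 d1 d2 by (auto simp: field_simps)
  have a1: "\<forall>x\<in>set a. d1*x \<notin> Omega_q q" and a2: "\<forall>x\<in>set a. d2*x \<notin> Omega_q q"
    and c1: "\<forall>x\<in>set c. d1*x \<notin> Omega_q q" and c2: "\<forall>x\<in>set c. d2*x \<notin> Omega_q q"
    using ha hc by auto
  note S1 = sum_eq[OF q0 q1 a1 c1 e1]
  note S2 = sum_eq[OF q0 q1 a2 c2 e2]
  define g where "g = (\<lambda>u. qpinf (q * r * u / s) q * qpinf (q / r * u / s) q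
                     * qpinf_list (map (\<lambda>x. x * (d1 / r) * u / s) a) q
                     / qpinf_list (map (\<lambda>x. x * (d1 / r) * u / s) c) q)"
  have gb: "q^n * g (q^n * (s*r)) = q^n * (qpinf ((q*d1/d2)*q^n) q * qpinf (q*q^n) q * qpinf_list (map (\<lambda>x. d1*x*q^n) a) q
           / qpinf_list (map (\<lambda>x. d1*x*q^n) c) q)" for n
  proof -
    have "q * r * (q^n * (s*r)) / s = q*(r*r)*q^n" using s0 by (simp add: field_simps)
    also have "\<dots> = (q*d1/d2)*q^n" unfolding rr by simp
    finally have f1: "q * r * (q^n * (s*r)) / s = (q*d1/d2)*q^n" .
    have f2: "q / r * (q^n * (s*r)) / s = q*q^n" using s0 r0 by (simp add: field_simps)
    have f3: "map (\<lambda>x. x * (d1 / r) * (q^n * (s*r)) / s) xs = map (\<lambda>x. d1*x*q^n) xs" for xs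
      using s0 r0 by (intro map_cong) (auto simp: field_simps)
    show ?thesis unfolding g_def by (simp only: f1 f2 f3)
  qed
  have ga: "q^n * g (q^n * (s/r)) = q^n * (qpinf ((q*d2/d1)*q^n) q * qpinf (q*q^n) q * qpinf_list (map (\<lambda>x. d2*x*q^n) a) q
           / qpinf_list (map (\<lambda>x. d2*x*q^n) c) q)" for n
  proof -
    have f1: "q * r * (q^n * (s/r)) / s = q*q^n" using s0 r0 by (simp add: field_simps)
    have "q / r * (q^n * (s/r)) / s = q*q^n/(r*r)" using s0 r0 by (simp add: field_simps)
    also have "\<dots> = (q*d2/d1)*q^n" unfolding rr using d1 d2 by (simp add: field_simps)
    finally have f2: "q / r * (q^n * (s/r)) / s = (q*d2/d1)*q^n" .
    have f3: "map (\<lambda>x. x * (d1 / r) * (q^n * (s/r)) / s) xs = map (\<lambda>x. d2*x*q^n) xs" for xs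
    proof (intro map_cong refl)
      fix x show "x * (d1 / r) * (q^n * (s/r)) / s = d2*x*q^n"
      proof -
        have "x * (d1 / r) * (q^n * (s/r)) / s = x*d1*q^n/(r*r)" using s0 r0 by (simp add: field_simps)
        also have "\<dots> = d2*x*q^n" unfolding rr using d1 d2 by (simp add: field_simps)
        finally show ?thesis .
      qed
    qed
    show ?thesis unfolding g_def by (simp only: f1 f2 f3 mult.commute[of "qpinf (q*q^n) q"])
  qed
  have J: "jackson g q (s/r) (s*r) = (1-q)*(s*r)*(K a c d1 d2 q * suminf (T a c d1 d2 q))
         - (1-q)*(s/r)*(K a c d2 d1 q * suminf (T a c d2 d1 q))"
    unfolding jackson_def gb ga S1 S2 ..
  have th: "theta (d2/d1) q = qpinf (d2/d1) q * qpinf (q*d1/d2) q"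
    unfolding theta_def using d1 d2 by (simp add: field_simps)
  have p1: "qpinf (d2/d1) q = (1 - d2/d1) * qpinf (q*d2/d1) q" using qpinf_one[OF q1, of "d2/d1"] by simp
  have p2: "qpinf (d1/d2) q = (1 - d1/d2) * qpinf (q*d1/d2) q" using qpinf_one[OF q1, of "d1/d2"] by simp
  have nQ: "qpinf q q \<noteq> 0" by (rule qpinf_nz[OF q1]) (rule qq_nz[OF q1])
  have n12: "qpinf (q*d1/d2) q \<noteq> 0" by (rule qpinf_nz[OF q1 e1])
  have n21: "qpinf (q*d2/d1) q \<noteq> 0" by (rule qpinf_nz[OF q1 e2])
  have nc1: "qpinf_list (map (\<lambda>x. d1*x) c) q \<noteq> 0" by (rule qpinf_list_nz[OF q0 q1 c1])
  have nc2: "qpinf_list (map (\<lambda>x. d2*x) c) q \<noteq> 0" by (rule qpinf_list_nz[OF q0 q1 c2])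
  have q1': "q \<noteq> 1" using q1 by auto
  show ?thesis
    unfolding RHS_def g_def[symmetric] J Hterm_def bhs_T th p1 p2 K_def
    by (rule final_alg[OF r2 r0 s0 q1' d1 d2 nQ n12 n21 nc1 nc2 e3 e4])
qed


theorem theorem2p4:
  fixes a c :: "complex list" and d1 d2 r s q :: complex
  assumes "q \<noteq> 0" and "norm q < 1"
    and "d1 \<noteq> 0" and "d2 \<noteq> 0"
    and "d2 / d1 \<notin> range (\<lambda>m::int. q powi m)"
    and "\<forall>x\<in>set c. d1 * x \<notin> Omega_q q \<and> d2 * x \<notin> Omega_q q"
    and "\<forall>x\<in>set a. d1 * x \<notin> Omega_q q \<and> d2 * x \<notin> Omega_q q"
    and "s \<noteq> 0"
    and "r ^ 2 = d1 / d2"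
  shows "H a c d1 d2 q = RHS a c d1 d2 r s q
    \<and> (\<forall>r'. r' ^ 2 = d2 / d1 \<longrightarrow> RHS a c d2 d1 r' s q = RHS a c d1 d2 r s q)"
proof -
  have M: "RHS a c d1 d2 r s q = Hterm a c d1 d2 q + Hterm a c d2 d1 q"
    by (rule main[OF assms])
  have nr': "d1 / d2 \<notin> range (\<lambda>m::int. q powi m)"
  proof
    assume "d1 / d2 \<in> range (\<lambda>m::int. q powi m)"
    then obtain m where "d1/d2 = q powi m" by auto
    hence "d2/d1 = inverse (q powi m)" by (metis inverse_divide)
    hence "d2/d1 = q powi (-m)" by (simp add: power_int_minus)
    thus False using assms(5) by blast
  qed
  have hc': "\<forall>x\<in>set c. d2 * x \<notin> Omega_q q \<and> d1 * x \<notin> Omega_q q" using assms(6) by auto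
  have ha': "\<forall>x\<in>set a. d2 * x \<notin> Omega_q q \<and> d1 * x \<notin> Omega_q q" using assms(7) by auto
  have "RHS a c d2 d1 r' s q = RHS a c d1 d2 r s q" if "r' ^ 2 = d2 / d1" for r'
    using main[OF assms(1,2,4,3) nr' hc' ha' assms(8) that] M by (simp add: add.commute)
  moreover have "H a c d1 d2 q = RHS a c d1 d2 r s q" unfolding H_def M ..
  ultimately show ?thesis by blast
qed

end
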